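(* Let $N\ge 1$, $L\ge 1$, $M\ge 2$ be integers and let $\omega>0$, $\eta>0$. Let $\mathcal{C}_1,\dots,\mathcal{C}_L\in\mathbb{R}^{r_1\times\cdots\times r_{N+1}}$ be core tensors and, for each $d=1,\dots,N+1$, let $f_{\theta_d}:\mathbb{R}\to\mathbb{R}^{r_d}$ be a fully-connected neural network of depth $M$ with sine activation, i.e. $$f_{\theta_d}(x)=\mathbf{W}^{d}_M\,\sigma\big(\mathbf{W}^{d}_{M-1}\,\sigma(\cdots\sigma(\mathbf{W}^{d}_1 x)\cdots)\big),$$ where $\mathbf{W}^d_1\in\mathbb{R}^{m^d_1\times 1}$, $\mathbf{W}^d_k\in\mathbb{R}^{m^d_k\times m^d_{k-1}}$, $\mathbf{W}^d_M\in\mathbb{R}^{r_d\times m^d_{M-1}}$, and $\sigma(t)=\sin(\omega t)$ is applied entrywise. Assume $\|\mathcal{C}_l\|_{\ell_1}\le\eta$ for all $l$ and $\|\mathbf{W}^d_k\|_{\ell_1}\le\eta$ for all $d,k$. For $l=1,\dots,L$ define $s_l:\mathbb{R}^{N+1}\to\mathbb{R}$ by $$s_l(\mathbf{v})=\mathcal{C}_l\times_1 f_{\theta_1}(\mathbf{v}_{(1)})\times_2\cdots\times_{N+1} f_{\theta_{N+1}}(\mathbf{v}_{(N+1)}).$$ Then for any $l_1,l_2\in\{1,\dots,L\}$, any $d\in\{1,\dots,N+1\}$, and any real numbers $v_1,\dots,v_{d-1},v_d',v_d'',v_{d+1},\dots,v_{N+1}$, $$|s_{l_1}(v_1,\dots,v_{d-1},v_d',v_{d+1},\dots,v_{N+1})-s_{l_2}(v_1,\dots,v_{d-1},v_d'',v_{d+1},\dots,v_{N+1})|\le\delta_1|v_d'-v_d''|+\delta_2,$$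 where $\xi=\max\{|v_1|,\dots,|v_{d-1}|,|v_d'|,|v_d''|,|v_{d+1}|,\dots,|v_{N+1}|\}$, $\delta_1=\eta^{MN+M+1}\omega^{(M-1)(N+1)}\xi^{N}$ and $\delta_2=2\eta^{MN+M+1}\omega^{(M-1)(N+1)}\xi^{N+1}$. Moreover, when $l_1=l_2$ the bound holds with $\delta_2$ removed, i.e. the left-hand side is at most $\delta_1|v_d'-v_d''|$.
   Context: For a vector $\mathbf{v}$, $\mathbf{v}_{(d)}$ denotes its $d$-th entry. The $\ell_1$-norm of a tensor or matrix is the sum of absolute values of all its entries: $\|\mathcal{X}\|_{\ell_1}=\sum_{i_1,\dots,i_K}|\mathcal{X}_{(i_1,\dots,i_K)}|$. For $\mathcal{X}\in\mathbb{R}^{n_1\times\cdots\times n_K}$, $\mathbf{X}^{(d)}=\mathrm{unfold}_d(\mathcal{X})\in\mathbb{R}^{n_d\times\prod_{j\ne d}n_j}$ is the mode-$d$ unfolding and $\mathrm{fold}_d$ its inverse; the mode-$d$ product with $\mathbf{A}\in\mathbb{R}^{m\times n_d}$ is $\mathcal{X}\times_d\mathbf{A}=\mathrm{fold}_d(\mathbf{A}\mathbf{X}^{(d)})$. A vector $\mathbf{a}\in\mathbb{R}^{r_d}$ used in a mode-$d$ product is treated as the $1\times r_d$ matrix $\mathbf{a}^\top$, so that $\mathcal{C}_l\times_1 f_{\theta_1}(\cdot)\times_2\cdots\times_{N+1}f_{\theta_{N+1}}(\cdot)$ is a scalar. *)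

theory Defs
  imports Complex_Main "HOL-Library.FuncSet"
begin

(* Vectors are functions nat => real (entries 0..len-1), matrices are
   functions nat => nat => real (entry (i,j), i < rows, j < cols).
   A depth-M network for mode d has weights W k (k = 1..M) and layer
   widths m 0 = 1 (scalar input), m 1, ..., m (M-1), m M = r_d;
   W k is an (m k) x (m (k-1)) matrix. *)

definition mat_l1 :: "(nat \<Rightarrow> nat \<Rightarrow> real) \<Rightarrow> nat \<Rightarrow> nat \<Rightarrow> real" where
  "mat_l1 A p q = (\<Sum>i<p. \<Sum>j<q. \<bar>A i j\<bar>)"

fun sine_hidden :: "real \<Rightarrow> (nat \<Rightarrow> nat \<Rightarrow> nat \<Rightarrow> real) \<Rightarrow> (nat \<Rightarrow> nat) \<Rightarrow> nat \<Rightarrow> real \<Rightarrow> nat \<Rightarrow> real" where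
  "sine_hidden \<omega> W m 0 x = (\<lambda>i. if i = 0 then x else 0)"
| "sine_hidden \<omega> W m (Suc k) x =
     (\<lambda>i. if i < m (Suc k)
          then sin (\<omega> * (\<Sum>j<m k. W (Suc k) i j * sine_hidden \<omega> W m k x j)) else 0)"

definition sine_net :: "real \<Rightarrow> (nat \<Rightarrow> nat \<Rightarrow> nat \<Rightarrow> real) \<Rightarrow> (nat \<Rightarrow> nat) \<Rightarrow> nat \<Rightarrow> real \<Rightarrow> nat \<Rightarrow> real" where
  "sine_net \<omega> W m M x =
     (\<lambda>i. if i < m M then (\<Sum>j<m (M - 1). W M i j * sine_hidden \<omega> W m (M - 1) x j) else 0)"

(* Tensors of order n with mode sizes r 1, ..., r n: functions on multi-indices
   iota with iota d < r d for d in {1..n}. *)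
definition tensor_indices :: "nat \<Rightarrow> (nat \<Rightarrow> nat) \<Rightarrow> (nat \<Rightarrow> nat) set" where
  "tensor_indices n r = PiE {1..n} (\<lambda>d. {..<r d})"

definition tensor_l1 :: "nat \<Rightarrow> (nat \<Rightarrow> nat) \<Rightarrow> ((nat \<Rightarrow> nat) \<Rightarrow> real) \<Rightarrow> real" where
  "tensor_l1 n r C = (\<Sum>\<iota>\<in>tensor_indices n r. \<bar>C \<iota>\<bar>)"

definition full_mode_product :: "nat \<Rightarrow> (nat \<Rightarrow> nat) \<Rightarrow> ((nat \<Rightarrow> nat) \<Rightarrow> real) \<Rightarrow> (nat \<Rightarrow> nat \<Rightarrow> real) \<Rightarrow> real" where
  "full_mode_product n r C a = (\<Sum>\<iota>\<in>tensor_indices n r. C \<iota> * (\<Prod>d\<in>{1..n}. a d (\<iota> d)))"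

definition s_fun :: "nat \<Rightarrow> (nat \<Rightarrow> nat) \<Rightarrow> ((nat \<Rightarrow> nat) \<Rightarrow> real) \<Rightarrow> real
     \<Rightarrow> (nat \<Rightarrow> nat \<Rightarrow> nat \<Rightarrow> nat \<Rightarrow> real) \<Rightarrow> (nat \<Rightarrow> nat \<Rightarrow> nat) \<Rightarrow> nat \<Rightarrow> (nat \<Rightarrow> real) \<Rightarrow> real" where
  "s_fun N r C \<omega> W m M v =
     full_mode_product (N + 1) r C (\<lambda>d. sine_net \<omega> (W d) (m d) M (v d))"

end

theory Submission
  imports Defs
begin

lemma sin_lip: "\<bar>sin (w::real) - sin z\<bar> \<le> \<bar>w - z\<bar>"
proof -
  have "\<bar>sin w - sin z\<bar> = 2 * \<bar>sin ((w - z) / 2)\<bar> * \<bar>cos ((w + z) / 2)\<bar>"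
    by (simp add: sin_diff_sin abs_mult)
  also have "\<dots> \<le> 2 * \<bar>(w - z) / 2\<bar> * 1"
    by (intro mult_mono abs_sin_x_le_abs_x) auto
  finally show ?thesis by simp
qed

lemma hidden_bound:
  assumes "\<omega> > 0" "\<eta> \<ge> 0"
    and rows: "\<And>k i. k \<in> {1..n} \<Longrightarrow> i < m k \<Longrightarrow> (\<Sum>j<m (k-1). \<bar>W k i j\<bar>) \<le> \<eta>"
  shows "k \<le> n \<Longrightarrow> \<bar>sine_hidden \<omega> W m k x i\<bar> \<le> (\<omega>*\<eta>)^k * \<bar>x\<bar>
            \<and> \<bar>sine_hidden \<omega> W m k x i - sine_hidden \<omega> W m k y i\<bar> \<le> (\<omega>*\<eta>)^k * \<bar>x - y\<bar>"
proof (induction k arbitrary: i)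
  case 0
  then show ?case by auto
next
  case (Suc k)
  have IH: "\<And>j. \<bar>sine_hidden \<omega> W m k x j\<bar> \<le> (\<omega>*\<eta>)^k * \<bar>x\<bar>"
     "\<And>j. \<bar>sine_hidden \<omega> W m k x j - sine_hidden \<omega> W m k y j\<bar> \<le> (\<omega>*\<eta>)^k * \<bar>x - y\<bar>"
    using Suc by auto
  show ?case
  proof (cases "i < m (Suc k)")
    case False
    then show ?thesis using assms by simp
  next
    case True
    have R: "(\<Sum>j<m k. \<bar>W (Suc k) i j\<bar>) \<le> \<eta>" using rows[of "Suc k" i] True Suc.prems by simp
    have A: "\<bar>\<Sum>j<m k. W (Suc k) i j * sine_hidden \<omega> W m k x j\<bar> \<le> \<eta> * ((\<omega>*\<eta>)^k * \<bar>x\<bar>)"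
    proof -
      have "\<bar>\<Sum>j<m k. W (Suc k) i j * sine_hidden \<omega> W m k x j\<bar> \<le> (\<Sum>j<m k. \<bar>W (Suc k) i j\<bar> * ((\<omega>*\<eta>)^k * \<bar>x\<bar>))"
        by (rule order_trans[OF sum_abs], rule sum_mono) (simp add: abs_mult mult_left_mono IH(1))
      also have "\<dots> = (\<Sum>j<m k. \<bar>W (Suc k) i j\<bar>) * ((\<omega>*\<eta>)^k * \<bar>x\<bar>)" by (simp add: sum_distrib_right)
      also have "\<dots> \<le> \<eta> * ((\<omega>*\<eta>)^k * \<bar>x\<bar>)" using R assms by (intro mult_right_mono) auto
      finally show ?thesis .
    qed
    have B: "\<bar>(\<Sum>j<m k. W (Suc k) i j * sine_hidden \<omega> W m k x j) - (\<Sum>j<m k. W (Suc k) i j * sine_hidden \<omega> W m k y j)\<bar> \<le> \<eta> * ((\<omega>*\<eta>)^k * \<bar>x - y\<bar>)"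
    proof -
      have "\<bar>(\<Sum>j<m k. W (Suc k) i j * sine_hidden \<omega> W m k x j) - (\<Sum>j<m k. W (Suc k) i j * sine_hidden \<omega> W m k y j)\<bar>
          = \<bar>\<Sum>j<m k. W (Suc k) i j * (sine_hidden \<omega> W m k x j - sine_hidden \<omega> W m k y j)\<bar>"
        by (simp add: sum_subtractf right_diff_distrib)
      also have "\<dots> \<le> (\<Sum>j<m k. \<bar>W (Suc k) i j\<bar> * ((\<omega>*\<eta>)^k * \<bar>x - y\<bar>))"
        by (rule order_trans[OF sum_abs], rule sum_mono) (simp add: abs_mult mult_left_mono IH(2))
      also have "\<dots> = (\<Sum>j<m k. \<bar>W (Suc k) i j\<bar>) * ((\<omega>*\<eta>)^k * \<bar>x - y\<bar>)" by (simp add: sum_distrib_right)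
      also have "\<dots> \<le> \<eta> * ((\<omega>*\<eta>)^k * \<bar>x - y\<bar>)" using R assms by (intro mult_right_mono) auto
      finally show ?thesis .
    qed
    have "\<bar>sine_hidden \<omega> W m (Suc k) x i\<bar> \<le> \<bar>\<omega> * (\<Sum>j<m k. W (Suc k) i j * sine_hidden \<omega> W m k x j)\<bar>"
      using True by (simp add: abs_sin_x_le_abs_x)
    also have "\<dots> \<le> \<omega> * (\<eta> * ((\<omega>*\<eta>)^k * \<bar>x\<bar>))" using A assms by (simp add: abs_mult)
    finally have 1: "\<bar>sine_hidden \<omega> W m (Suc k) x i\<bar> \<le> (\<omega>*\<eta>)^Suc k * \<bar>x\<bar>" by (simp add: algebra_simps)
    have "\<bar>sine_hidden \<omega> W m (Suc k) x i - sine_hidden \<omega> W m (Suc k) y i\<bar> \<le>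
       \<bar>\<omega> * (\<Sum>j<m k. W (Suc k) i j * sine_hidden \<omega> W m k x j) - \<omega> * (\<Sum>j<m k. W (Suc k) i j * sine_hidden \<omega> W m k y j)\<bar>"
      using True by (simp add: sin_lip)
    also have "\<dots> \<le> \<omega> * (\<eta> * ((\<omega>*\<eta>)^k * \<bar>x - y\<bar>))" using B assms
      by (simp add: abs_mult flip: right_diff_distrib)
    finally have 2: "\<bar>sine_hidden \<omega> W m (Suc k) x i - sine_hidden \<omega> W m (Suc k) y i\<bar> \<le> (\<omega>*\<eta>)^Suc k * \<bar>x - y\<bar>"
      by (simp add: algebra_simps)
    show ?thesis using 1 2 by blast
  qed
qed


lemma net_bound:
  assumes "\<omega> > 0" "\<eta> \<ge> 0" "M \<ge> 1"
    and rows: "\<And>k i. k \<in> {1..M} \<Longrightarrow> i < m k \<Longrightarrow> (\<Sum>j<m (k-1). \<bar>W k i j\<bar>) \<le> \<eta>"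
  shows "\<bar>sine_net \<omega> W m M x i\<bar> \<le> \<eta>^M * \<omega>^(M-1) * \<bar>x\<bar>
     \<and> \<bar>sine_net \<omega> W m M x i - sine_net \<omega> W m M y i\<bar> \<le> \<eta>^M * \<omega>^(M-1) * \<bar>x - y\<bar>"
proof -
  have rows': "\<And>k i. k \<in> {1..M-1} \<Longrightarrow> i < m k \<Longrightarrow> (\<Sum>j<m (k-1). \<bar>W k i j\<bar>) \<le> \<eta>"
    using rows by auto
  have H: "\<And>j. \<bar>sine_hidden \<omega> W m (M-1) x j\<bar> \<le> (\<omega>*\<eta>)^(M-1) * \<bar>x\<bar>"
     "\<And>j. \<bar>sine_hidden \<omega> W m (M-1) x j - sine_hidden \<omega> W m (M-1) y j\<bar> \<le> (\<omega>*\<eta>)^(M-1) * \<bar>x - y\<bar>"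
    using hidden_bound[where n="M-1" and m=m and W=W, OF assms(1,2) rows' order_refl] by auto
  have E: "\<eta> * (\<omega>*\<eta>)^(M-1) = \<eta>^M * \<omega>^(M-1)"
    using assms(3) by (cases M) (auto simp: power_mult_distrib)
  show ?thesis
  proof (cases "i < m M")
    case False
    then show ?thesis using assms by (simp add: sine_net_def)
  next
    case True
    have R: "(\<Sum>j<m (M-1). \<bar>W M i j\<bar>) \<le> \<eta>" using rows[of M i] True assms by simp
    have A: "\<bar>\<Sum>j<m (M-1). W M i j * sine_hidden \<omega> W m (M-1) x j\<bar> \<le> \<eta> * ((\<omega>*\<eta>)^(M-1) * \<bar>x\<bar>)"
    proof -
      have "\<bar>\<Sum>j<m (M-1). W M i j * sine_hidden \<omega> W m (M-1) x j\<bar> \<le> (\<Sum>j<m (M-1). \<bar>W M i j\<bar> * ((\<omega>*\<eta>)^(M-1) * \<bar>x\<bar>))"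
        by (rule order_trans[OF sum_abs], rule sum_mono) (simp only: abs_mult, intro mult_left_mono H(1) abs_ge_zero)
      also have "\<dots> = (\<Sum>j<m (M-1). \<bar>W M i j\<bar>) * ((\<omega>*\<eta>)^(M-1) * \<bar>x\<bar>)" by (simp add: sum_distrib_right)
      also have "\<dots> \<le> \<eta> * ((\<omega>*\<eta>)^(M-1) * \<bar>x\<bar>)" using R assms by (intro mult_right_mono) auto
      finally show ?thesis .
    qed
    have B: "\<bar>(\<Sum>j<m (M-1). W M i j * sine_hidden \<omega> W m (M-1) x j) - (\<Sum>j<m (M-1). W M i j * sine_hidden \<omega> W m (M-1) y j)\<bar> \<le> \<eta> * ((\<omega>*\<eta>)^(M-1) * \<bar>x - y\<bar>)"
    proof -
      have "\<bar>(\<Sum>j<m (M-1). W M i j * sine_hidden \<omega> W m (M-1) x j) - (\<Sum>j<m (M-1). W M i j * sine_hidden \<omega> W m (M-1) y j)\<bar>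
          = \<bar>\<Sum>j<m (M-1). W M i j * (sine_hidden \<omega> W m (M-1) x j - sine_hidden \<omega> W m (M-1) y j)\<bar>"
        by (simp add: sum_subtractf right_diff_distrib)
      also have "\<dots> \<le> (\<Sum>j<m (M-1). \<bar>W M i j\<bar> * ((\<omega>*\<eta>)^(M-1) * \<bar>x - y\<bar>))"
        by (rule order_trans[OF sum_abs], rule sum_mono) (simp only: abs_mult, intro mult_left_mono H(2) abs_ge_zero)
      also have "\<dots> = (\<Sum>j<m (M-1). \<bar>W M i j\<bar>) * ((\<omega>*\<eta>)^(M-1) * \<bar>x - y\<bar>)" by (simp add: sum_distrib_right)
      also have "\<dots> \<le> \<eta> * ((\<omega>*\<eta>)^(M-1) * \<bar>x - y\<bar>)" using R assms by (intro mult_right_mono) auto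
      finally show ?thesis .
    qed
    show ?thesis using A B True E by (simp add: sine_net_def mult.assoc[symmetric])
  qed
qed

lemma fin_ti: "finite (tensor_indices n r)"
  unfolding tensor_indices_def by (rule finite_PiE) auto

lemma fmp_bound:
  assumes "\<And>e j. e \<in> {1..n} \<Longrightarrow> \<bar>a e j\<bar> \<le> B" "B \<ge> 0"
  shows "\<bar>full_mode_product n r C a\<bar> \<le> tensor_l1 n r C * B^n"
proof -
  have "\<bar>full_mode_product n r C a\<bar> \<le> (\<Sum>\<iota>\<in>tensor_indices n r. \<bar>C \<iota>\<bar> * B^n)"
    unfolding full_mode_product_def
  proof (rule order_trans[OF sum_abs], rule sum_mono)
    fix \<iota>
    have "\<bar>\<Prod>d\<in>{1..n}. a d (\<iota> d)\<bar> = (\<Prod>d\<in>{1..n}. \<bar>a d (\<iota> d)\<bar>)" by (simp add: abs_prod)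
    also have "\<dots> \<le> (\<Prod>d\<in>{1..n}. B)" by (rule prod_mono) (use assms in auto)
    finally show "\<bar>C \<iota> * (\<Prod>d\<in>{1..n}. a d (\<iota> d))\<bar> \<le> \<bar>C \<iota>\<bar> * B^n"
      by (simp add: abs_mult mult_left_mono)
  qed
  then show ?thesis by (simp add: tensor_l1_def sum_distrib_right)
qed

lemma fmp_lip:
  assumes d: "d \<in> {1..n}" and eq: "\<And>e. e \<in> {1..n} \<Longrightarrow> e \<noteq> d \<Longrightarrow> a e = b e"
    and bd: "\<And>e j. e \<in> {1..n} \<Longrightarrow> e \<noteq> d \<Longrightarrow> \<bar>a e j\<bar> \<le> B" "B \<ge> 0"
    and lp: "\<And>j. \<bar>a d j - b d j\<bar> \<le> D"
  shows "\<bar>full_mode_product n r C a - full_mode_product n r C b\<bar> \<le> tensor_l1 n r C * B^(n-1) * D"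
proof -
  have D0: "D \<ge> 0" using lp[of 0] by linarith
  have "\<bar>full_mode_product n r C a - full_mode_product n r C b\<bar> \<le> (\<Sum>\<iota>\<in>tensor_indices n r. \<bar>C \<iota>\<bar> * (B^(n-1) * D))"
    unfolding full_mode_product_def sum_subtractf[symmetric]
  proof (rule order_trans[OF sum_abs], rule sum_mono)
    fix \<iota>
    have pa: "(\<Prod>e\<in>{1..n}. a e (\<iota> e)) = a d (\<iota> d) * (\<Prod>e\<in>{1..n}-{d}. a e (\<iota> e))"
      using d by (simp add: prod.remove)
    have pb: "(\<Prod>e\<in>{1..n}. b e (\<iota> e)) = b d (\<iota> d) * (\<Prod>e\<in>{1..n}-{d}. a e (\<iota> e))"
      using d eq by (simp add: prod.remove)
    have "\<bar>\<Prod>e\<in>{1..n}-{d}. a e (\<iota> e)\<bar> = (\<Prod>e\<in>{1..n}-{d}. \<bar>a e (\<iota> e)\<bar>)" by (simp add: abs_prod)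
    also have "\<dots> \<le> (\<Prod>e\<in>{1..n}-{d}. B)" by (rule prod_mono) (use bd in auto)
    also have "\<dots> = B^(n-1)" using d by simp
    finally have P: "\<bar>\<Prod>e\<in>{1..n}-{d}. a e (\<iota> e)\<bar> \<le> B^(n-1)" .
    have "\<bar>C \<iota> * (\<Prod>e\<in>{1..n}. a e (\<iota> e)) - C \<iota> * (\<Prod>e\<in>{1..n}. b e (\<iota> e))\<bar>
        = \<bar>C \<iota>\<bar> * (\<bar>\<Prod>e\<in>{1..n}-{d}. a e (\<iota> e)\<bar> * \<bar>a d (\<iota> d) - b d (\<iota> d)\<bar>)"
    proof -
      have "C \<iota> * (a d (\<iota> d) * (\<Prod>e\<in>{1..n}-{d}. a e (\<iota> e))) - C \<iota> * (b d (\<iota> d) * (\<Prod>e\<in>{1..n}-{d}. a e (\<iota> e)))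
         = C \<iota> * ((\<Prod>e\<in>{1..n}-{d}. a e (\<iota> e)) * (a d (\<iota> d) - b d (\<iota> d)))"
        by (simp add: algebra_simps)
      then show ?thesis unfolding pa pb by (simp only: abs_mult)
    qed
    also have "\<dots> \<le> \<bar>C \<iota>\<bar> * (B^(n-1) * D)"
      by (intro mult_left_mono mult_mono P lp) (use bd in auto)
    finally show "\<bar>C \<iota> * (\<Prod>e\<in>{1..n}. a e (\<iota> e)) - C \<iota> * (\<Prod>e\<in>{1..n}. b e (\<iota> e))\<bar> \<le> \<bar>C \<iota>\<bar> * (B^(n-1) * D)" .
  qed
  then show ?thesis by (simp add: tensor_l1_def sum_distrib_right mult.assoc)
qed


theorem lemma3:
  fixes N L M :: nat and \<omega> \<eta> :: real
    and r :: "nat \<Rightarrow> nat"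
    and C :: "nat \<Rightarrow> (nat \<Rightarrow> nat) \<Rightarrow> real"
    and W :: "nat \<Rightarrow> nat \<Rightarrow> nat \<Rightarrow> nat \<Rightarrow> real"
    and m :: "nat \<Rightarrow> nat \<Rightarrow> nat"
    and l1 l2 d :: nat and v :: "nat \<Rightarrow> real" and a b :: real
  assumes "N \<ge> 1" and "L \<ge> 1" and "M \<ge> 2" and "\<omega> > 0" and "\<eta> > 0"
    and "\<And>e. e \<in> {1..N+1} \<Longrightarrow> m e 0 = 1"
    and "\<And>e. e \<in> {1..N+1} \<Longrightarrow> m e M = r e"
    and "\<And>l. l \<in> {1..L} \<Longrightarrow> tensor_l1 (N + 1) r (C l) \<le> \<eta>"
    and "\<And>e k. e \<in> {1..N+1} \<Longrightarrow> k \<in> {1..M} \<Longrightarrow> mat_l1 (W e k) (m e k) (m e (k - 1)) \<le> \<eta>"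
    and "l1 \<in> {1..L}" and "l2 \<in> {1..L}" and "d \<in> {1..N+1}"
  shows "let \<xi> = Max ({\<bar>a\<bar>, \<bar>b\<bar>} \<union> (\<lambda>j. \<bar>v j\<bar>) ` ({1..N+1} - {d}));
             \<delta>1 = \<eta> ^ (M * N + M + 1) * \<omega> ^ ((M - 1) * (N + 1)) * \<xi> ^ N;
             \<delta>2 = 2 * \<eta> ^ (M * N + M + 1) * \<omega> ^ ((M - 1) * (N + 1)) * \<xi> ^ (N + 1);
             sa = s_fun N r (C l1) \<omega> W m M (v(d := a));
             sb = s_fun N r (C l2) \<omega> W m M (v(d := b))
         in \<bar>sa - sb\<bar> \<le> \<delta>1 * \<bar>a - b\<bar> + \<delta>2 \<and>
            (l1 = l2 \<longrightarrow> \<bar>sa - sb\<bar> \<le> \<delta>1 * \<bar>a - b\<bar>)"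
proof -
  define S where "S = {\<bar>a\<bar>, \<bar>b\<bar>} \<union> (\<lambda>j. \<bar>v j\<bar>) ` ({1..N+1} - {d})"
  define \<xi> where "\<xi> = Max S"
  have finS: "finite S" unfolding S_def by auto
  have xa: "\<bar>a\<bar> \<le> \<xi>" unfolding \<xi>_def by (rule Max_ge[OF finS]) (simp add: S_def)
  have xb: "\<bar>b\<bar> \<le> \<xi>" unfolding \<xi>_def by (rule Max_ge[OF finS]) (simp add: S_def)
  have xv: "\<And>e. e \<in> {1..N+1} \<Longrightarrow> e \<noteq> d \<Longrightarrow> \<bar>v e\<bar> \<le> \<xi>"
    unfolding \<xi>_def using finS by (intro Max_ge) (auto simp: S_def)
  have x0: "\<xi> \<ge> 0" using xa by linarith
  define K where "K = \<eta>^M * \<omega>^(M-1)"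
  have K0: "K \<ge> 0" unfolding K_def using assms(4,5) by simp
  have rows: "\<And>e k i. e \<in> {1..N+1} \<Longrightarrow> k \<in> {1..M} \<Longrightarrow> i < m e k \<Longrightarrow> (\<Sum>j<m e (k-1). \<bar>W e k i j\<bar>) \<le> \<eta>"
  proof -
    fix e k i assume h: "e \<in> {1..N+1}" "k \<in> {1..M}" "i < m e k"
    have "(\<Sum>j<m e (k-1). \<bar>W e k i j\<bar>) \<le> mat_l1 (W e k) (m e k) (m e (k - 1))"
      unfolding mat_l1_def
      by (rule member_le_sum[where f="\<lambda>i. \<Sum>j<m e (k-1). \<bar>W e k i j\<bar>"]) (use h in \<open>auto intro: sum_nonneg\<close>)
    then show "(\<Sum>j<m e (k-1). \<bar>W e k i j\<bar>) \<le> \<eta>" using assms(9)[OF h(1,2)] by linarith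
  qed
  have NB: "\<And>e x y i. e \<in> {1..N+1} \<Longrightarrow> \<bar>sine_net \<omega> (W e) (m e) M x i\<bar> \<le> K * \<bar>x\<bar>
     \<and> \<bar>sine_net \<omega> (W e) (m e) M x i - sine_net \<omega> (W e) (m e) M y i\<bar> \<le> K * \<bar>x - y\<bar>"
    unfolding K_def using assms(3,4,5) rows by (intro net_bound) auto
  define fa where "fa = (\<lambda>e. sine_net \<omega> (W e) (m e) M ((v(d := a)) e))"
  define fb where "fb = (\<lambda>e. sine_net \<omega> (W e) (m e) M ((v(d := b)) e))"
  have va: "\<And>e. e \<in> {1..N+1} \<Longrightarrow> \<bar>(v(d := a)) e\<bar> \<le> \<xi>" using xa xv by auto
  have vb: "\<And>e. e \<in> {1..N+1} \<Longrightarrow> \<bar>(v(d := b)) e\<bar> \<le> \<xi>" using xb xv by auto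
  have ba: "\<And>e j. e \<in> {1..N+1} \<Longrightarrow> \<bar>fa e j\<bar> \<le> K * \<xi>"
    unfolding fa_def using NB va K0 by (meson mult_left_mono order_trans)
  have bb: "\<And>e j. e \<in> {1..N+1} \<Longrightarrow> \<bar>fb e j\<bar> \<le> K * \<xi>"
    unfolding fb_def using NB vb K0 by (meson mult_left_mono order_trans)
  have lp: "\<And>j. \<bar>fa d j - fb d j\<bar> \<le> K * \<bar>a - b\<bar>"
    unfolding fa_def fb_def using NB[OF assms(12)] by simp
  have eqab: "\<And>e. e \<in> {1..N+1} \<Longrightarrow> e \<noteq> d \<Longrightarrow> fa e = fb e" unfolding fa_def fb_def by simp
  have sa: "s_fun N r (C l1) \<omega> W m M (v(d := a)) = full_mode_product (N+1) r (C l1) fa"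
    unfolding s_fun_def fa_def ..
  have sb: "s_fun N r (C l2) \<omega> W m M (v(d := b)) = full_mode_product (N+1) r (C l2) fb"
    unfolding s_fun_def fb_def ..
  have T1: "tensor_l1 (N + 1) r (C l1) \<le> \<eta>" and T2: "tensor_l1 (N + 1) r (C l2) \<le> \<eta>"
    using assms(8,10,11) by auto
  have KX: "K * \<xi> \<ge> 0" using K0 x0 by simp
  have ew: "\<omega> ^ ((M - 1) * (N + 1)) = (\<omega>^(M-1))^N * \<omega>^(M-1)"
  proof -
    have "(M - 1) * (N + 1) = (M-1)*N + (M-1)" by simp
    then show ?thesis by (simp only: power_add power_mult)
  qed
  have ee: "\<eta> ^ (M * N + M + 1) = \<eta> * (\<eta>^M)^N * \<eta>^M"
  proof -
    have "M * N + M + 1 = 1 + M*N + M" by simp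
    then show ?thesis by (simp only: power_add power_mult power_one_right)
  qed
  have d1: "\<eta> ^ (M * N + M + 1) * \<omega> ^ ((M - 1) * (N + 1)) * \<xi> ^ N = \<eta> * (K*\<xi>)^N * K"
    unfolding K_def ew ee by (simp add: power_mult_distrib algebra_simps)
  have d2: "2 * \<eta> ^ (M * N + M + 1) * \<omega> ^ ((M - 1) * (N + 1)) * \<xi> ^ (N + 1) = 2 * (\<eta> * (K*\<xi>)^(N+1))"
    unfolding K_def ew ee by (simp add: power_mult_distrib algebra_simps)
  have A: "\<bar>full_mode_product (N+1) r (C l1) fa\<bar> \<le> \<eta> * (K*\<xi>)^(N+1)"
    using fmp_bound[of "N+1" fa "K*\<xi>" r "C l1", OF ba KX] T1 KX
    by (meson mult_right_mono order_trans zero_le_power)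
  have B: "\<bar>full_mode_product (N+1) r (C l2) fb\<bar> \<le> \<eta> * (K*\<xi>)^(N+1)"
    using fmp_bound[of "N+1" fb "K*\<xi>" r "C l2", OF bb KX] T2 KX
    by (meson mult_right_mono order_trans zero_le_power)
  have part2: "l1 = l2 \<longrightarrow> \<bar>full_mode_product (N+1) r (C l1) fa - full_mode_product (N+1) r (C l2) fb\<bar> \<le> \<eta> * (K*\<xi>)^N * K * \<bar>a - b\<bar>"
  proof
    assume "l1 = l2"
    have "\<bar>full_mode_product (N+1) r (C l1) fa - full_mode_product (N+1) r (C l1) fb\<bar>
        \<le> tensor_l1 (N+1) r (C l1) * (K*\<xi>)^(N+1-1) * (K * \<bar>a - b\<bar>)"
      by (rule fmp_lip[where n="N+1" and a=fa and b=fb and B="K*\<xi>" and D="K * \<bar>a - b\<bar>" and d=d, OF assms(12) eqab ba KX lp])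
    also have "\<dots> \<le> \<eta> * (K*\<xi>)^N * (K * \<bar>a - b\<bar>)"
      using T1 KX K0 by (intro mult_right_mono) (auto intro: mult_right_mono)
    finally show "\<bar>full_mode_product (N+1) r (C l1) fa - full_mode_product (N+1) r (C l2) fb\<bar> \<le> \<eta> * (K*\<xi>)^N * K * \<bar>a - b\<bar>"
      using \<open>l1 = l2\<close> by (simp add: mult.assoc)
  qed
  have nn: "\<eta> * (K*\<xi>)^N * K * \<bar>a - b\<bar> \<ge> 0" using assms(5) KX K0 by simp
  have part1: "\<bar>full_mode_product (N+1) r (C l1) fa - full_mode_product (N+1) r (C l2) fb\<bar> \<le> \<eta> * (K*\<xi>)^N * K * \<bar>a - b\<bar> + 2 * (\<eta> * (K*\<xi>)^(N+1))"
    using A B nn by linarith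
  show ?thesis
    unfolding Let_def S_def[symmetric] \<xi>_def[symmetric] d1 d2 sa sb
    using part1 part2 by simp
qed

end
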